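(* Let $\alpha\in[0,1]$ and $$S=\{(c,\ell)\in[0,1]\times[0,2L] : c\le\alpha,\ \ell\le 2L(1-\alpha)\}.$$ Then $S$ is approachable in the game with payoff $m$: there is a strategy of the learner such that, for every strategy of the opponent, $d(\overline{m}_T,S)\to 0$ almost surely as $T\to\infty$.
   Context: Fix $n\ge1$, $L>0$ and calibration scores $s_{(1)}<\dots<s_{(n)}$ in $[0,L)$, with $s_{(0)}=0$, $s_{(n+1)}=L$. Let $\mathcal{A}=\{k/(n+1):k=0,\dots,n+1\}$ and $\mathcal{B}=\{k/(n+1):k=1,\dots,n+1\}$. For $a\in\mathcal{A}$, the length of the conformal set is $\mathrm{Leb}(C_a)=2s_{(\lceil (n+1)(1-a)\rceil)}$ (so $\mathrm{Leb}(C_0)=2L$ and $\mathrm{Leb}(C_1)=0$). The vector payoff is $m:\mathcal{A}\times\mathcal{B}\to\mathbb{R}^2$, $m(a,b)=(\mathbf{1}_{b\le a},\ \mathrm{Leb}(C_a))$, extended bilinearly to mixed actions by $m(\boldsymbol{p},\boldsymbol{q})=\sum_{a,b}p_aq_b\,m(a,b)$ for $\boldsymbol p\in\Delta(\mathcal{A})$, $\boldsymbol q\in\Delta(\mathcal{B})$. Repeated game: at each round $t\ge1$ the learner chooses $\boldsymbol p_t\in\Delta(\mathcal{A})$ and the opponent chooses $\boldsymbol q_t\in\Delta(\mathcal{B})$, both as functions of the past history; then $a_t\sim\boldsymbol p_t$ and $b_t\sim\boldsymbol q_t$ are drawn independently given the past. Write $\overline m_T=\frac1T\sum_{t=1}^T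 m(a_t,b_t)$, and $d(x,S)=\min_{c\in S}\|x-c\|$ for the Euclidean norm. *)

theory Defs
  imports "HOL-Probability.Probability"
begin

text \<open>Actions are encoded by their numerators: the learner's action a = k/(n+1)
  is encoded by k in {0..n+1}, the opponent's action b = j/(n+1) by j in {1..n+1}.\<close>

definition act_A :: "nat \<Rightarrow> nat set" where
  "act_A n = {0..n+1}"

definition act_B :: "nat \<Rightarrow> nat set" where
  "act_B n = {1..n+1}"

text \<open>Scores: s k stands for s_(k); s 0 = 0 and s (n+1) = L by convention.\<close>
definition valid_scores :: "nat \<Rightarrow> real \<Rightarrow> (nat \<Rightarrow> real) \<Rightarrow> bool" where
  "valid_scores n L s \<longleftrightarrow>
     s 0 = 0 \<and> s (n+1) = L \<and> strict_mono_on {1..n} s \<and>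
     (\<forall>k\<in>{1..n}. 0 \<le> s k \<and> s k < L)"

text \<open>Leb(C_a) = 2 s_(ceil((n+1)(1-a))) for a = k/(n+1).\<close>
definition leb_C :: "nat \<Rightarrow> (nat \<Rightarrow> real) \<Rightarrow> nat \<Rightarrow> real" where
  "leb_C n s k = 2 * s (nat \<lceil>real (n+1) * (1 - real k / real (n+1))\<rceil>)"

definition payoff :: "nat \<Rightarrow> (nat \<Rightarrow> real) \<Rightarrow> nat \<times> nat \<Rightarrow> real \<times> real" where
  "payoff n s ab =
     ((if real (snd ab) / real (n+1) \<le> real (fst ab) / real (n+1) then 1 else 0),
      leb_C n s (fst ab))"

text \<open>Average payoff over the first T rounds along a play \<omega> (round t+1 is \<omega> t).\<close>
definition avg_payoff :: "nat \<Rightarrow> (nat \<Rightarrow> real) \<Rightarrow> nat \<Rightarrow> (nat \<Rightarrow> nat \<times> nat) \<Rightarrow> real \<times> real" where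
  "avg_payoff n s T \<omega> = (1 / real T) *\<^sub>R (\<Sum>t<T. payoff n s (\<omega> t))"

text \<open>M is the law on the space of plays induced by learner strategy \<sigma> and opponent
  strategy \<tau>: at each round, given the history, the two actions are drawn
  independently from \<sigma> h and \<tau> h.\<close>
definition game_law ::
  "(nat \<Rightarrow> nat \<times> nat) measure \<Rightarrow> ((nat \<times> nat) list \<Rightarrow> nat pmf)
     \<Rightarrow> ((nat \<times> nat) list \<Rightarrow> nat pmf) \<Rightarrow> bool" where
  "game_law M \<sigma> \<tau> \<longleftrightarrow>
     prob_space M \<and>
     (\<forall>t. (\<lambda>\<omega>. \<omega> t) \<in> measurable M (count_space UNIV)) \<and>
     (\<forall>h. measure M {\<omega>\<in>space M. \<forall>t<length h. \<omega> t = h ! t} =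
          (\<Prod>t<length h. pmf (\<sigma> (take t h)) (fst (h ! t)) * pmf (\<tau> (take t h)) (snd (h ! t))))"

definition target_set :: "real \<Rightarrow> real \<Rightarrow> (real \<times> real) set" where
  "target_set L \<alpha> = {(c, l). 0 \<le> c \<and> c \<le> 1 \<and> 0 \<le> l \<and> l \<le> 2 * L \<and>
                              c \<le> \<alpha> \<and> l \<le> 2 * L * (1 - \<alpha>)}"

end

theory Submission
  imports Defs
begin

definition fl :: "real \<Rightarrow> nat \<Rightarrow> real" where
  "fl \<alpha> k = real_of_int \<lfloor>\<alpha> * real k\<rfloor>"

definition ee :: "real \<Rightarrow> nat \<Rightarrow> real" where
  "ee \<alpha> t = fl \<alpha> (Suc t) - fl \<alpha> t"

definition dd :: "nat \<Rightarrow> real \<Rightarrow> nat \<Rightarrow> nat" where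
  "dd n \<alpha> t = (if ee \<alpha> t = 1 then n + 1 else 0)"

lemma ee01:
  assumes "0 \<le> \<alpha>" "\<alpha> \<le> 1"
  shows "ee \<alpha> t = 0 \<or> ee \<alpha> t = 1"
proof -
  have e: "\<alpha> * real (Suc t) = \<alpha> * real t + \<alpha>" by (simp add: algebra_simps)
  have "\<lfloor>\<alpha> * real t\<rfloor> \<le> \<lfloor>\<alpha> * real t + \<alpha>\<rfloor>" using assms by (intro floor_mono) simp
  moreover have "\<lfloor>\<alpha> * real t + \<alpha>\<rfloor> \<le> \<lfloor>\<alpha> * real t + 1\<rfloor>" using assms by (intro floor_mono) simp
  ultimately have "\<lfloor>\<alpha> * real t + \<alpha>\<rfloor> = \<lfloor>\<alpha> * real t\<rfloor> \<or> \<lfloor>\<alpha> * real t + \<alpha>\<rfloor> = \<lfloor>\<alpha> * real t\<rfloor> + 1"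
    by linarith
  then show ?thesis unfolding ee_def fl_def e by auto
qed

lemma ae_good:
  assumes gl: "game_law M \<sigma> \<tau>"
    and sig: "\<And>h. \<sigma> h = return_pmf (d (length h))"
    and tauB: "\<And>h. set_pmf (\<tau> h) \<subseteq> B"
  shows "AE \<omega> in M. \<forall>t. fst (\<omega> t) = d t \<and> snd (\<omega> t) \<in> B"
proof (subst AE_all_countable, intro allI)
  fix t
  have ps: "prob_space M" and meas: "\<And>i. (\<lambda>\<omega>. \<omega> i) \<in> measurable M (count_space UNIV)"
    and law: "\<And>h. measure M {\<omega>\<in>space M. \<forall>t<length h. \<omega> t = h ! t} =
          (\<Prod>t<length h. pmf (\<sigma> (take t h)) (fst (h ! t)) * pmf (\<tau> (take t h)) (snd (h ! t)))"
    using gl unfolding game_law_def by auto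
  define H where "H = {h::(nat\<times>nat) list. length h = Suc t \<and> \<not> (fst (h!t) = d t \<and> snd (h!t) \<in> B)}"
  define C where "C h = {\<omega>\<in>space M. \<forall>i<length h. \<omega> i = h ! i}" for h :: "(nat\<times>nat) list"
  have Cs: "C h \<in> sets M" for h
  proof -
    have "C h = space M \<inter> (\<Inter>i\<in>{..<length h}. (\<lambda>\<omega>. \<omega> i) -` {h!i} \<inter> space M)"
      unfolding C_def by auto
    also have "\<dots> \<in> sets M"
    proof (cases "length h = 0")
      case True then show ?thesis by simp
    next
      case False
      have "(\<Inter>i\<in>{..<length h}. (\<lambda>\<omega>. \<omega> i) -` {h!i} \<inter> space M) \<in> sets M"
        using False meas by (intro sets.finite_INT) (auto intro: measurable_sets)
      then show ?thesis by (intro sets.Int sets.top)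
    qed
    finally show ?thesis .
  qed
  have Cnull: "C h \<in> null_sets M" if "h \<in> H" for h
  proof -
    have lh: "length h = Suc t" using that H_def by auto
    have "(\<Prod>t<length h. pmf (\<sigma> (take t h)) (fst (h ! t)) * pmf (\<tau> (take t h)) (snd (h ! t))) = 0"
    proof (rule prod_zero)
      show "\<exists>a\<in>{..<length h}. pmf (\<sigma> (take a h)) (fst (h ! a)) * pmf (\<tau> (take a h)) (snd (h ! a)) = 0"
      proof (intro bexI[of _ t])
        show "t \<in> {..<length h}" using lh by simp
        have "fst (h!t) \<noteq> d t \<or> snd (h!t) \<notin> B" using that H_def by auto
        then show "pmf (\<sigma> (take t h)) (fst (h ! t)) * pmf (\<tau> (take t h)) (snd (h ! t)) = 0"
        proof
          assume "fst (h!t) \<noteq> d t"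
          then show ?thesis using lh by (simp add: sig pmf_return)
        next
          assume "snd (h!t) \<notin> B"
          then have "snd (h!t) \<notin> set_pmf (\<tau> (take t h))" using tauB by blast
          then show ?thesis by (simp add: set_pmf_iff)
        qed
      qed
    qed simp
    then have "measure M (C h) = 0" using law C_def by simp
    then have "emeasure M (C h) = 0"
      using finite_measure.emeasure_eq_measure[OF prob_space.finite_measure[OF ps]] by simp
    then show ?thesis using Cs by auto
  qed
  have N: "(\<Union>h\<in>H. C h) \<in> null_sets M"
    by (rule null_sets_UN') (auto intro: Cnull)
  show "AE \<omega> in M. fst (\<omega> t) = d t \<and> snd (\<omega> t) \<in> B"
  proof (rule AE_I'[OF N], rule subsetI)
    fix \<omega> assume "\<omega> \<in> {\<omega> \<in> space M. \<not> (fst (\<omega> t) = d t \<and> snd (\<omega> t) \<in> B)}"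
    then have om: "\<omega> \<in> space M" "\<not> (fst (\<omega> t) = d t \<and> snd (\<omega> t) \<in> B)" by auto
    let ?h = "map \<omega> [0..<Suc t]"
    have "?h \<in> H" using om unfolding H_def by (simp del: upt_Suc)
    moreover have "\<omega> \<in> C ?h" using om unfolding C_def by (simp del: upt_Suc)
    ultimately show "\<omega> \<in> (\<Union>h\<in>H. C h)" by blast
  qed
qed

lemma payoff_val:
  assumes vs: "valid_scores n L s" and a: "0 \<le> \<alpha>" "\<alpha> \<le> 1"
    and f: "fst ab = dd n \<alpha> t" and b: "snd ab \<in> act_B n"
  shows "payoff n s ab = (ee \<alpha> t, 2 * L * (1 - ee \<alpha> t))"
proof -
  have s0: "s 0 = 0" and sL: "s (n+1) = L" using vs unfolding valid_scores_def by auto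
  have b1: "1 \<le> snd ab" "snd ab \<le> n + 1" using b unfolding act_B_def by auto
  from ee01[OF a, of t] show ?thesis
  proof
    assume e: "ee \<alpha> t = 0"
    then have fa: "fst ab = 0" using f unfolding dd_def by simp
    have "\<not> real (snd ab) / real (n+1) \<le> 0" using b1
      by (simp add: divide_le_0_iff not_le)
    have "nat \<lceil>real (n+1) * (1 - real 0 / real (n+1))\<rceil> = n + 1"
      by (metis ceiling_of_nat diff_zero mult.right_neutral div_0 nat_int of_nat_0)
    then have "leb_C n s 0 = 2 * L" unfolding leb_C_def using sL by simp
    moreover have "\<not> real (snd ab) / real (n+1) \<le> 0" using b1
      by (simp add: divide_le_0_iff not_le)
    ultimately show ?thesis unfolding payoff_def using fa e by simp
  next
    assume e: "ee \<alpha> t = 1"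
    then have fa: "fst ab = n + 1" using f unfolding dd_def by simp
    have "real (snd ab) / real (n+1) \<le> real (n+1) / real (n+1)" using b1
      by (intro divide_right_mono) auto
    moreover have "leb_C n s (n+1) = 0" unfolding leb_C_def using s0 by simp
    ultimately show ?thesis unfolding payoff_def using fa e by simp
  qed
qed

lemma sum_ee: "(\<Sum>t<T. ee \<alpha> t) = fl \<alpha> T"
  unfolding ee_def using sum_lessThan_telescope[of "fl \<alpha>" T] by (simp add: fl_def)

lemma avg_bound:
  assumes vs: "valid_scores n L s" and a: "0 \<le> \<alpha>" "\<alpha> \<le> 1" and L: "L > 0"
    and good: "\<forall>t. fst (\<omega> t) = dd n \<alpha> t \<and> snd (\<omega> t) \<in> act_B n"
    and T: "T > 0"
  shows "infdist (avg_payoff n s T \<omega>) (target_set L \<alpha>) \<le> (1 + 2 * L) / real T"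
proof -
  define q where "q = fl \<alpha> T / real T"
  have sumeq: "(\<Sum>t<T. payoff n s (\<omega> t)) = (\<Sum>t<T. (ee \<alpha> t, 2 * L * (1 - ee \<alpha> t)))"
    using payoff_val[OF vs a] good by (intro sum.cong) auto
  have "(\<Sum>t<T. (ee \<alpha> t, 2 * L * (1 - ee \<alpha> t))) = (fl \<alpha> T, 2 * L * (real T - fl \<alpha> T))"
    by (rule prod_eqI) (simp_all add: fst_sum snd_sum sum_ee sum_subtractf sum_distrib_left[symmetric] right_diff_distrib)
  then have avg: "avg_payoff n s T \<omega> = (q, 2 * L * (1 - q))"
    unfolding avg_payoff_def sumeq q_def using T by (simp add: field_simps)
  have p: "(\<alpha>, 2 * L * (1 - \<alpha>)) \<in> target_set L \<alpha>"
    unfolding target_set_def using a L by (auto simp: mult_le_cancel_left1)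
  have fl1: "fl \<alpha> T \<le> \<alpha> * real T" "\<alpha> * real T < fl \<alpha> T + 1" unfolding fl_def by linarith+
  have qa: "\<bar>q - \<alpha>\<bar> \<le> 1 / real T"
  proof -
    have "\<bar>fl \<alpha> T - \<alpha> * real T\<bar> \<le> 1" using fl1 by linarith
    then have "\<bar>fl \<alpha> T - \<alpha> * real T\<bar> / real T \<le> 1 / real T" using T by (intro divide_right_mono) auto
    moreover have "\<bar>fl \<alpha> T - \<alpha> * real T\<bar> / real T = \<bar>q - \<alpha>\<bar>"
      unfolding q_def using T by (simp add: field_simps abs_div_pos[symmetric])
    ultimately show ?thesis by simp
  qed
  have "infdist (avg_payoff n s T \<omega>) (target_set L \<alpha>) \<le> dist (q, 2 * L * (1 - q)) (\<alpha>, 2 * L * (1 - \<alpha>))"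
    unfolding avg by (rule infdist_le[OF p])
  also have "\<dots> = norm (q - \<alpha>, 2 * L * (\<alpha> - q))"
    by (simp add: dist_norm algebra_simps)
  also have "\<dots> \<le> norm (q - \<alpha>) + norm (2 * L * (\<alpha> - q))" by (rule norm_Pair_le)
  also have "\<dots> = (1 + 2 * L) * \<bar>q - \<alpha>\<bar>" using L by (simp add: abs_mult distrib_right abs_minus_commute)
  also have "\<dots> \<le> (1 + 2 * L) * (1 / real T)" using qa L by (intro mult_left_mono) auto
  finally show ?thesis by simp
qed

theorem lemma3:
  fixes n :: nat and L \<alpha> :: real and s :: "nat \<Rightarrow> real"
  assumes "n \<ge> 1" and "L > 0" and "valid_scores n L s"
    and "0 \<le> \<alpha>" and "\<alpha> \<le> 1"
  shows "\<exists>\<sigma>. (\<forall>h. set_pmf (\<sigma> h) \<subseteq> act_A n) \<and>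
           (\<forall>\<tau> M. (\<forall>h. set_pmf (\<tau> h) \<subseteq> act_B n) \<longrightarrow> game_law M \<sigma> \<tau> \<longrightarrow>
              (AE \<omega> in M. (\<lambda>T. infdist (avg_payoff n s T \<omega>) (target_set L \<alpha>)) \<longlonglongrightarrow> 0))"
proof (intro exI[of _ "\<lambda>h. return_pmf (dd n \<alpha> (length h))"] conjI allI impI)
  fix h :: "(nat \<times> nat) list"
  show "set_pmf (return_pmf (dd n \<alpha> (length h))) \<subseteq> act_A n"
    by (simp add: act_A_def dd_def)
next
  fix \<tau> M
  assume tB: "\<forall>h. set_pmf (\<tau> h) \<subseteq> act_B n"
    and gl: "game_law M (\<lambda>h. return_pmf (dd n \<alpha> (length h))) \<tau>"
  have ae: "AE \<omega> in M. \<forall>t. fst (\<omega> t) = dd n \<alpha> t \<and> snd (\<omega> t) \<in> act_B n"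
    by (rule ae_good[OF gl]) (use tB in auto)
  show "AE \<omega> in M. (\<lambda>T. infdist (avg_payoff n s T \<omega>) (target_set L \<alpha>)) \<longlonglongrightarrow> 0"
    using ae
  proof (rule AE_mp, intro AE_I2 impI)
    fix \<omega> assume good: "\<forall>t. fst (\<omega> t) = dd n \<alpha> t \<and> snd (\<omega> t) \<in> act_B n"
    show "(\<lambda>T. infdist (avg_payoff n s T \<omega>) (target_set L \<alpha>)) \<longlonglongrightarrow> 0"
    proof (rule Lim_null_comparison)
      show "\<forall>\<^sub>F T in sequentially. norm (infdist (avg_payoff n s T \<omega>) (target_set L \<alpha>)) \<le> (1 + 2 * L) / real T"
        using eventually_gt_at_top[of 0]
      proof eventually_elim
        case (elim T)
        then show ?case using avg_bound[OF assms(3,4,5,2) good, of T] infdist_nonneg[of "avg_payoff n s T \<omega>" "target_set L \<alpha>"] by simp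
      qed
      show "(\<lambda>T. (1 + 2 * L) / real T) \<longlonglongrightarrow> 0" by (rule lim_const_over_n)
    qed
  qed
qed

end
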